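(* Assume $\mathrm Z_++\mathrm Z_-=n-1$. Then for every sufficiently large real $\lambda>0$ the operator $C(\lambda)$ is boundedly invertible, and $\|C^{-1}(\lambda)\|=O(\lambda^{-1})$ as $\lambda\to+\infty$.
   Context: Let $n\ge 2$ be an integer, let $a_1,\dots,a_n>0$ with $\sum_k a_k=1$, and let $d_1,\dots,d_n,\beta_1,\dots,\beta_n$ be real numbers with $\sum_k a_kd_k^2<1$. Put $\alpha_0=0$ and $\alpha_k=\alpha_{k-1}+a_k$. Let $P\in L_2[0,1]$ be the unique function with $P(\alpha_{k-1}+a_kx)=\beta_k+d_kP(x)$ for a.e. $x\in[0,1]$, $k=1,\dots,n$. Assume there is $m\in\{1,\dots,n\}$ with $d_k=0$ for all $k\ne m$. Let $\mathfrak H=\{y\in W_2^1[0,1]: y(0)=y(1)=0\}$ with inner product $\langle y,z\rangle=\int_0^1 y'\overline{z'}\,dx$. For $k=1,\dots,n-1$ put $\gamma_k=\alpha_{k-1}$ if $k\ne m$, $\gamma_m=\alpha_m-a_ma_n$; $\delta_k=\alpha_{k+1}$ if $k\ne m-1$, $\delta_{m-1}=\alpha_{m-1}+a_ma_1$. Let $e_k\in\mathfrak H$ equal $(x-\gamma_k)/(\alpha_k-\gamma_k)$ on $[\gamma_k,\alpha_k]$, $(\delta_k-x)/(\delta_k-\alpha_k)$ on $[\alpha_k,\delta_k]$, and $0$ elsewhere, and let $\mathfrak H_2=\operatorname{span}\{e_1,\dots,e_{n-1}\}$. For $\lambda\in\mathbb R$ let $C(\lambda)$ be the self-adjoint operator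 on $\mathfrak H_2$ (with the inner product of $\mathfrak H$) such that $\langle C(\lambda)y,z\rangle=\int_0^1\big(y'\overline{z'}+\lambda P\cdot(y\overline z)'\big)dx$ for $y,z\in\mathfrak H_2$. For $k=1,\dots,n-1$ define $\zeta_{m-1}=\beta_m-\beta_{m-1}+d_m\beta_1$ (if $m-1\ge1$), $\zeta_m=\beta_{m+1}-\beta_m-d_m\beta_n$ (if $m\le n-1$), and $\zeta_k=\beta_{k+1}-\beta_k$ for the other $k$. Let $\mathrm Z_\pm=\#\{k\in\{1,\dots,n-1\}:\pm\zeta_k>0\}$. *)

theory Defs
  imports "HOL-Analysis.Analysis" "HOL-Library.Landau_Symbols"
begin

text \<open>Sequences are indexed 1..n; a, d, beta :: nat => real.\<close>

definition alpha :: "(nat \<Rightarrow> real) \<Rightarrow> nat \<Rightarrow> real" where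
  "alpha a k = (\<Sum>i=1..k. a i)"

definition gam :: "(nat \<Rightarrow> real) \<Rightarrow> nat \<Rightarrow> nat \<Rightarrow> nat \<Rightarrow> real" where
  "gam a n m k = (if k = m then alpha a m - a m * a n else alpha a (k - 1))"

definition delt :: "(nat \<Rightarrow> real) \<Rightarrow> nat \<Rightarrow> nat \<Rightarrow> real" where
  "delt a m k = (if k + 1 = m then alpha a (m - 1) + a m * a 1 else alpha a (k + 1))"

definition hat :: "real \<Rightarrow> real \<Rightarrow> real \<Rightarrow> real \<Rightarrow> real" where
  "hat g al dl x = (if g \<le> x \<and> x \<le> al then (x - g) / (al - g)
                    else if al \<le> x \<and> x \<le> dl then (dl - x) / (dl - al) else 0)"

definition ebasis :: "(nat \<Rightarrow> real) \<Rightarrow> nat \<Rightarrow> nat \<Rightarrow> nat \<Rightarrow> real \<Rightarrow> complex" where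
  "ebasis a n m k x = complex_of_real (hat (gam a n m k) (alpha a k) (delt a m k) x)"

definition H2 :: "(nat \<Rightarrow> real) \<Rightarrow> nat \<Rightarrow> nat \<Rightarrow> (real \<Rightarrow> complex) set" where
  "H2 a n m = {(\<lambda>x. \<Sum>k=1..n-1. c k * ebasis a n m k x) | c :: nat \<Rightarrow> complex. True}"

definition ipH :: "(real \<Rightarrow> complex) \<Rightarrow> (real \<Rightarrow> complex) \<Rightarrow> complex" where
  "ipH y z = integral {0..1} (\<lambda>x. vector_derivative y (at x) * cnj (vector_derivative z (at x)))"

definition normH :: "(real \<Rightarrow> complex) \<Rightarrow> real" where
  "normH y = sqrt (Re (ipH y y))"

definition Cform :: "(real \<Rightarrow> real) \<Rightarrow> real \<Rightarrow> (real \<Rightarrow> complex) \<Rightarrow> (real \<Rightarrow> complex) \<Rightarrow> complex" where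
  "Cform P lam y z = integral {0..1} (\<lambda>x. vector_derivative y (at x) * cnj (vector_derivative z (at x))
       + complex_of_real (lam * P x) * vector_derivative (\<lambda>t. y t * cnj (z t)) (at x))"

definition opnorm_on :: "(real \<Rightarrow> complex) set \<Rightarrow> ((real \<Rightarrow> complex) \<Rightarrow> (real \<Rightarrow> complex)) \<Rightarrow> real" where
  "opnorm_on S T = Sup ((\<lambda>w. normH (T w) / normH w) ` (S - {\<lambda>x. 0}))"

definition zeta :: "(nat \<Rightarrow> real) \<Rightarrow> (nat \<Rightarrow> real) \<Rightarrow> nat \<Rightarrow> nat \<Rightarrow> nat \<Rightarrow> real" where
  "zeta d beta n m k =
     (if k + 1 = m then beta m - beta (m - 1) + d m * beta 1
      else if k = m then beta (m + 1) - beta m - d m * beta n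
      else beta (k + 1) - beta k)"

definition Zplus :: "(nat \<Rightarrow> real) \<Rightarrow> (nat \<Rightarrow> real) \<Rightarrow> nat \<Rightarrow> nat \<Rightarrow> nat" where
  "Zplus d beta n m = card {k \<in> {1..n-1}. zeta d beta n m k > 0}"

definition Zminus :: "(nat \<Rightarrow> real) \<Rightarrow> (nat \<Rightarrow> real) \<Rightarrow> nat \<Rightarrow> nat \<Rightarrow> nat" where
  "Zminus d beta n m = card {k \<in> {1..n-1}. zeta d beta n m k < 0}"

end

theory Submission
  imports Defs "Jordan_Normal_Form.Determinant"
begin


lemma alpha_0[simp]: "alpha a 0 = 0" by (simp add: alpha_def)
lemma alpha_Suc: "alpha a (Suc k) = alpha a k + a (Suc k)" by (simp add: alpha_def)

lemma alpha_mono_strict: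
  assumes "\<forall>i\<in>{1..n}. a i > 0" "k < l" "l \<le> n"
  shows "alpha a k < alpha a l"
  using assms(2,3)
proof (induction l)
  case 0 then show ?case by simp
next
  case (Suc l)
  have pos: "a (Suc l) > 0" using assms(1) Suc.prems by auto
  show ?case
  proof (cases "k = l")
    case True then show ?thesis using pos by (simp add: alpha_Suc)
  next
    case False
    then have "alpha a k < alpha a l" using Suc by auto
    then show ?thesis using pos by (simp add: alpha_Suc)
  qed
qed

lemma alpha_mono:
  assumes "\<forall>i\<in>{1..n}. a i > 0" "k \<le> l" "l \<le> n"
  shows "alpha a k \<le> alpha a l"
  using alpha_mono_strict[OF assms(1), of k l] assms(2,3)
  by (cases "k = l") auto

lemma hat_maxmin:
  assumes "g < al" "al < dl"
  shows "hat g al dl x = max 0 (min ((x - g) / (al - g)) ((dl - x) / (dl - al)))"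
proof -
  have p1: "al - g > 0" "dl - al > 0" using assms by auto
  consider "g \<le> x \<and> x \<le> al" | "\<not>(g \<le> x \<and> x \<le> al) \<and> al \<le> x \<and> x \<le> dl" | "x < g" | "x > dl"
    by linarith
  then show ?thesis
  proof cases
    case 1
    then have "(x - g) / (al - g) \<le> 1" "(dl - x) / (dl - al) \<ge> 1" "(x - g) / (al - g) \<ge> 0"
      using p1 by (auto simp: divide_simps)
    then show ?thesis using 1 by (simp add: hat_def)
  next
    case 2
    then have "(x - g) / (al - g) \<ge> 1" "(dl - x) / (dl - al) \<le> 1" "(dl - x) / (dl - al) \<ge> 0"
      using p1 by (auto simp: divide_simps)
    then show ?thesis using 2 by (auto simp add: hat_def)
  next
    case 3
    then have "(x - g) / (al - g) < 0" using p1 by (auto simp: divide_simps)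
    then show ?thesis using 3 assms by (simp add: hat_def)
  next
    case 4
    then have "(dl - x) / (dl - al) < 0" using p1 by (auto simp: divide_simps)
    then show ?thesis using 4 assms by (simp add: hat_def)
  qed
qed

lemma hat_cont:
  assumes "g < al" "al < dl"
  shows "continuous_on S (hat g al dl)"
proof -
  have "continuous_on S (\<lambda>x. max 0 (min ((x - g) / (al - g)) ((dl - x) / (dl - al))))"
    using assms by (intro continuous_intros) auto
  then show ?thesis using hat_maxmin[OF assms] by simp
qed

lemma hat_al: "g < al \<Longrightarrow> hat g al dl al = 1" by (auto simp add: hat_def)
lemma hat_out: "g < al \<Longrightarrow> al < dl \<Longrightarrow> x \<le> g \<or> dl \<le> x \<Longrightarrow> hat g al dl x = 0"
  by (auto simp: hat_def)

definition hatd :: "real \<Rightarrow> real \<Rightarrow> real \<Rightarrow> real \<Rightarrow> real" where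
  "hatd g al dl x = (if g < x \<and> x < al then 1 / (al - g) else if al < x \<and> x < dl then - 1 / (dl - al) else 0)"

lemma hat_deriv:
  assumes "g < al" "al < dl" "x \<notin> {g, al, dl}"
  shows "(hat g al dl has_real_derivative hatd g al dl x) (at x)"
proof -
  consider "g < x \<and> x < al" | "al < x \<and> x < dl" | "x < g" | "x > dl"
    using assms by force
  then show ?thesis
  proof cases
    case 1
    have "((\<lambda>x. (x - g) / (al - g)) has_real_derivative 1 / (al - g)) (at x)"
      using assms by (auto intro!: derivative_eq_intros)
    then have "(hat g al dl has_real_derivative 1 / (al - g)) (at x)"
      by (rule has_field_derivative_transform_within_open[where S="{g<..<al}"]) (use 1 in \<open>auto simp: hat_def\<close>)
    then show ?thesis using 1 by (simp add: hatd_def)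
  next
    case 2
    have "((\<lambda>x. (dl - x) / (dl - al)) has_real_derivative - 1 / (dl - al)) (at x)"
      using assms by (auto intro!: derivative_eq_intros simp: divide_simps)
    then have "(hat g al dl has_real_derivative - 1 / (dl - al)) (at x)"
      by (rule has_field_derivative_transform_within_open[where S="{al<..<dl}"]) (use 2 in \<open>auto simp: hat_def\<close>)
    then show ?thesis using 2 by (simp add: hatd_def)
  next
    case 3
    have "((\<lambda>x. 0) has_real_derivative 0) (at x)"
      by (auto intro!: derivative_eq_intros)
    then have "(hat g al dl has_real_derivative 0) (at x)"
      by (rule has_field_derivative_transform_within_open[where S="{..<g}"]) (use 3 assms in \<open>auto simp: hat_def\<close>)
    then show ?thesis using 3 assms by (simp add: hatd_def)
  next
    case 4
    have "((\<lambda>x. 0) has_real_derivative 0) (at x)"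
      by (auto intro!: derivative_eq_intros)
    then have "(hat g al dl has_real_derivative 0) (at x)"
      by (rule has_field_derivative_transform_within_open[where S="{dl<..}"]) (use 4 assms in \<open>auto simp: hat_def\<close>)
    then show ?thesis using 4 assms by (simp add: hatd_def)
  qed
qed


locale sset =
  fixes n m :: nat and a :: "nat \<Rightarrow> real"
  assumes n2: "n \<ge> 2" and apos: "\<forall>k\<in>{1..n}. a k > 0"
    and asum: "(\<Sum>k=1..n. a k) = 1" and m: "m \<in> {1..n}"
begin

abbreviation "N \<equiv> n - 1"
abbreviation "g k \<equiv> gam a n m k"
abbreviation "al k \<equiv> alpha a k"
abbreviation "dl k \<equiv> delt a m k"

lemma al_n: "al n = 1" using asum by (simp add: alpha_def)

lemma al_mono: "k \<le> l \<Longrightarrow> l \<le> n \<Longrightarrow> al k \<le> al l"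
  using alpha_mono[OF apos] by blast
lemma al_smono: "k < l \<Longrightarrow> l \<le> n \<Longrightarrow> al k < al l"
  using alpha_mono_strict[OF apos] by blast

lemma a_lt1:
  assumes k: "k \<in> {1..n}" shows "a k < 1"
proof -
  have "(if k = 1 then 2 else 1) \<in> {1..n} \<and> (if k = 1 then 2 else (1::nat)) \<noteq> k" using k n2 by auto
  then obtain j where j: "j \<in> {1..n}" "j \<noteq> k" by blast
  have "(\<Sum>i=1..n. a i) = a k + (\<Sum>i\<in>{1..n}-{k}. a i)"
    using k by (simp add: sum.remove)
  moreover have "a j \<le> (\<Sum>i\<in>{1..n}-{k}. a i)"
    by (rule member_le_sum) (use j apos in \<open>auto intro!: less_imp_le\<close>)
  moreover have "a j > 0" using j apos by auto
  ultimately show ?thesis using asum by linarith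
qed

lemma al_pred: "k \<ge> 1 \<Longrightarrow> al k = al (k - 1) + a k"
  by (cases k) (auto simp: alpha_Suc)

lemma g_bounds':
  assumes k: "k \<in> {1..N}" shows "al (k - 1) \<le> g k \<and> g k < al k"
proof -
  have ak: "a k > 0" using k apos by auto
  show ?thesis
  proof (cases "k = m")
    case True
    have an: "a n > 0" "a n < 1" using apos a_lt1 n2 by auto
    have "a m * a n < a m" "a m * a n > 0" using an ak True by auto
    then show ?thesis using True al_pred[of k] k an
      by (auto simp: gam_def)
  next
    case False
    then show ?thesis using al_smono[of "k - 1" k] k
      by (auto simp: gam_def)
  qed
qed

lemma g_bounds: "k \<in> {1..N} \<Longrightarrow> al (k - 1) \<le> g k" "k \<in> {1..N} \<Longrightarrow> g k < al k"
  using g_bounds' by auto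

lemma dl_bounds':
  assumes k: "k \<in> {1..N}" shows "al k < dl k \<and> dl k \<le> al (k + 1)"
proof -
  have ak: "a (k+1) > 0" using k apos by auto
  show ?thesis
  proof (cases "k + 1 = m")
    case True
    have a1: "a 1 > 0" "a 1 < 1" using apos a_lt1 n2 by auto
    have "a m * a 1 < a m" "a m * a 1 > 0" using a1 ak True by auto
    then show ?thesis using True al_pred[of "k+1"] k a1
      by (auto simp: delt_def)
  next
    case False
    then show ?thesis using al_smono[of k "k+1"] k
      by (auto simp: delt_def)
  qed
qed

lemma dl_bounds: "k \<in> {1..N} \<Longrightarrow> al k < dl k" "k \<in> {1..N} \<Longrightarrow> dl k \<le> al (k + 1)"
  using dl_bounds' by auto

lemma g_nonneg: assumes "k \<in> {1..N}" shows "0 \<le> g k"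
proof -
  have "k - 1 \<le> n" using assms by auto
  then show ?thesis using g_bounds(1)[OF assms] al_mono[of 0 "k - 1"] by auto
qed

lemma dl_le1: assumes "k \<in> {1..N}" shows "dl k \<le> 1"
proof -
  have "k + 1 \<le> n" using assms by auto
  then show ?thesis using dl_bounds(2)[OF assms] al_mono[of "k+1" n] al_n by auto
qed

lemma hat_at_al:
  assumes j: "j \<in> {1..N}" and k: "k \<in> {1..N}"
  shows "hat (g j) (al j) (dl j) (al k) = (if j = k then 1 else 0)"
proof (cases "j = k")
  case True then show ?thesis using g_bounds[OF j] by (simp add: hat_al)
next
  case False
  note gb = g_bounds[OF j] and db = dl_bounds[OF j]
  show ?thesis
  proof (cases "j < k")
    case True
    then have "al (j+1) \<le> al k" using al_mono[of "j+1" k] k by auto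
    then show ?thesis using hat_out[of "g j" "al j" "dl j" "al k"] gb db False by auto
  next
    case False': False
    then have "k \<le> j - 1" using False by auto
    then have "al k \<le> al (j - 1)" using al_mono[of k "j - 1"] j by auto
    then show ?thesis using hat_out[of "g j" "al j" "dl j" "al k"] gb db False by auto
  qed
qed

end


lemma AE_negl:
  assumes "AE x in lebesgue_on {0..1::real}. Q x"
  shows "\<exists>S. negligible S \<and> (\<forall>x\<in>{0..1} - S. Q x)"
proof -
  from AE_E3[OF assms] obtain S where S: "\<And>x. x \<in> {0..1} - S \<Longrightarrow> Q x"
    "S \<in> null_sets (lebesgue_on {0..1})"
    by (metis space_lebesgue_on)
  then have "S \<in> null_sets lebesgue"
    using null_sets_restrict_space[of "{0..1::real}" lebesgue S] by auto
  then show ?thesis using S negligible_iff_null_sets by blast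
qed

lemma negl_aff: "negligible S \<Longrightarrow> negligible ((\<lambda>x::real. c + b * x) ` S)"
  by (rule negligible_differentiable_image_negligible) (auto intro!: derivative_intros)

lemma aff_transfer:
  assumes T: "negligible T" and b: "b > (0::real)"
    and H: "\<forall>x\<in>{0..1} - T. Q (c + b * x) (x)"
  shows "\<exists>T'. negligible T' \<and> (\<forall>t\<in>{c..c+b} - T'. Q t ((t - c) / b))"
proof (intro exI conjI ballI)
  show "negligible ((\<lambda>x. c + b * x) ` T)" by (rule negl_aff[OF T])
  fix t assume t: "t \<in> {c..c+b} - (\<lambda>x. c + b * x) ` T"
  let ?x = "(t - c) / b"
  have e: "t = c + b * ?x" using b by auto
  have "?x \<in> {0..1}" using t b by (auto simp: divide_simps)
  moreover have "?x \<notin> T" using t e by (metis DiffD2 image_eqI)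
  ultimately have "?x \<in> {0..1} - T" by simp
  with H have "Q (c + b * ?x) ?x" by (rule bspec)
  moreover have eq: "c + b * ?x = t" using b by simp
  ultimately show "Q t ?x" by (simp only: eq)
qed

locale sset2 = sset +
  fixes d beta :: "nat \<Rightarrow> real" and P :: "real \<Rightarrow> real"
  assumes dzero: "\<forall>k\<in>{1..n}. k \<noteq> m \<longrightarrow> d k = 0"
    and Pself: "\<forall>k\<in>{1..n}. AE x in lebesgue_on {0..1}.
                   P (alpha a (k - 1) + a k * x) = beta k + d k * P x"
begin

lemma P_scaled:
  assumes j: "j \<in> {1..n}"
  shows "\<exists>T. negligible T \<and> (\<forall>t\<in>{al (j - 1)..al j} - T.
            P t = beta j + d j * P ((t - al (j - 1)) / a j))"
proof -
  obtain S where S: "negligible S" "\<forall>x\<in>{0..1} - S. P (al (j - 1) + a j * x) = beta j + d j * P x"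
    using AE_negl Pself j by blast
  have aj: "a j > 0" using apos j by auto
  have e: "al j = al (j - 1) + a j" using al_pred[of j] j by auto
  show ?thesis
    using aff_transfer[OF S(1) aj, of "\<lambda>t x. P t = beta j + d j * P x" "al (j - 1)"] S(2) e
    by auto
qed

lemma P_const:
  assumes j: "j \<in> {1..n}" "j \<noteq> m"
  shows "\<exists>T. negligible T \<and> (\<forall>t\<in>{al (j - 1)..al j} - T. P t = beta j)"
  using P_scaled[OF j(1)] dzero j by auto

lemma P_sub:
  assumes j: "j \<in> {1..n}" "j \<noteq> m"
  shows "\<exists>T. negligible T \<and> (\<forall>t\<in>{al (m - 1) + a m * al (j - 1)..al (m - 1) + a m * al j} - T.
            P t = beta m + d m * beta j)"
proof -
  obtain T1 where T1: "negligible T1" "\<forall>t\<in>{al (m - 1)..al m} - T1.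
            P t = beta m + d m * P ((t - al (m - 1)) / a m)"
    using P_scaled m by blast
  obtain T2 where T2: "negligible T2" "\<forall>t\<in>{al (j - 1)..al j} - T2. P t = beta j"
    using P_const[OF j] by blast
  have am: "a m > 0" using apos m by auto
  let ?f = "\<lambda>x. al (m - 1) + a m * x"
  have sub: "al (j - 1) \<ge> 0" "al j \<le> 1" using al_mono[of 0 "j - 1"] al_mono[of j n] al_n j by auto
  have eam: "al m = al (m - 1) + a m" using al_pred[of m] m by auto
  show ?thesis
  proof (intro exI conjI ballI)
    show "negligible (T1 \<union> ?f ` T2)" using T1(1) negl_aff[OF T2(1)] by auto
    fix t assume t: "t \<in> {al (m - 1) + a m * al (j - 1)..al (m - 1) + a m * al j} - (T1 \<union> ?f ` T2)"
    let ?x = "(t - al (m - 1)) / a m"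
    have e: "t = ?f ?x" using am by auto
    have x1: "?x \<in> {al (j - 1)..al j}" using t am by (auto simp: divide_simps mult.commute)
    have "?x \<notin> T2" using t e by (metis DiffD2 UnI2 image_eqI)
    with x1 T2 have Px: "P ?x = beta j" by auto
    have "a m * al (j - 1) \<ge> 0" "a m * al j \<le> a m" using sub am by (auto simp: mult_left_le)
    then have "t \<in> {al (m - 1)..al m} - T1" using t eam by auto
    with T1 Px show "P t = beta m + d m * beta j" by auto
  qed
qed

definition pl where "pl k = (if k = m then beta m + d m * beta n else beta k)"
definition pr where "pr k = (if k + 1 = m then beta m + d m * beta 1 else beta (k + 1))"

lemma P_left:
  assumes k: "k \<in> {1..N}"
  shows "\<exists>T. negligible T \<and> (\<forall>t\<in>{g k..al k} - T. P t = pl k)"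
proof (cases "k = m")
  case True
  have nm: "n \<in> {1..n}" "n \<noteq> m" using k True n2 by auto
  have "al (n - 1) = 1 - a n" using al_pred[of n] al_n n2 by auto
  then have "a m * al (n - 1) = a m - a m * a n" by (simp add: right_diff_distrib)
  then have "al (m - 1) + a m * al (n - 1) = g k" "al (m - 1) + a m * al n = al k"
    using True al_pred[of m] m al_n by (auto simp: gam_def algebra_simps)
  then show ?thesis using P_sub[OF nm] True by (auto simp: pl_def)
next
  case False
  then show ?thesis using P_const[of k] k by (auto simp: pl_def gam_def)
qed

lemma P_right:
  assumes k: "k \<in> {1..N}"
  shows "\<exists>T. negligible T \<and> (\<forall>t\<in>{al k..dl k} - T. P t = pr k)"
proof (cases "k + 1 = m")
  case True
  have nm: "1 \<in> {1..n}" "1 \<noteq> m" using k True n2 by auto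
  have "al (m - 1) + a m * al (1 - 1) = al k" "al (m - 1) + a m * al 1 = dl k"
    using True by (auto simp: delt_def alpha_def)
  then show ?thesis using P_sub[OF nm] True by (auto simp: pr_def)
next
  case False
  then show ?thesis using P_const[of "k+1"] k by (auto simp: pr_def delt_def)
qed

end


context sset2 begin

definition hk where "hk k x = hat (g k) (al k) (dl k) x"
definition hdk where "hdk k x = hatd (g k) (al k) (dl k) x"
definition Ex where "Ex = (\<Union>k\<in>{1..N}. {g k, al k, dl k})"
definition hd where "hd j k x = hdk j x * hk k x + hdk k x * hk j x"

lemma finite_Ex: "finite Ex" by (simp add: Ex_def)

lemma gad: "k \<in> {1..N} \<Longrightarrow> g k < al k \<and> al k < dl k \<and> 0 \<le> g k \<and> dl k \<le> 1"
  using g_bounds dl_bounds g_nonneg dl_le1 by blast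

lemma hk_deriv:
  assumes k: "k \<in> {1..N}" and x: "x \<notin> Ex"
  shows "(hk k has_real_derivative hdk k x) (at x)"
proof -
  have "x \<notin> {g k, al k, dl k}" using x k by (auto simp: Ex_def)
  then show ?thesis using hat_deriv[of "g k" "al k" "dl k" x] gad[OF k]
    unfolding hk_def[abs_def] hdk_def by auto
qed

lemma hk_cont: "k \<in> {1..N} \<Longrightarrow> continuous_on S (hk k)"
  using hat_cont gad unfolding hk_def[abs_def] by blast

lemma hk_prod_deriv:
  assumes j: "j \<in> {1..N}" and k: "k \<in> {1..N}" and x: "x \<notin> Ex"
  shows "((\<lambda>t. hk j t * hk k t) has_real_derivative hd j k x) (at x)"
  unfolding hd_def using DERIV_mult[OF hk_deriv[OF j x] hk_deriv[OF k x]] .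

lemma hk_out: "k \<in> {1..N} \<Longrightarrow> x \<le> g k \<or> dl k \<le> x \<Longrightarrow> hk k x = 0"
  using hat_out gad unfolding hk_def by blast

lemma hdk_out: assumes "k \<in> {1..N}" "x \<le> g k \<or> dl k \<le> x" shows "hdk k x = 0"
  using gad[OF assms(1)] assms(2) unfolding hdk_def hatd_def by auto

lemma hd_out: "j \<in> {1..N} \<Longrightarrow> k \<in> {1..N} \<Longrightarrow> x \<le> g k \<or> dl k \<le> x \<Longrightarrow> hd j k x = 0"
  unfolding hd_def using hk_out hdk_out by simp

lemma hk_g: "k \<in> {1..N} \<Longrightarrow> hk k (g k) = 0" using hk_out by blast
lemma hk_dl: "k \<in> {1..N} \<Longrightarrow> hk k (dl k) = 0" using hk_out by blast
lemma hk_al: "j \<in> {1..N} \<Longrightarrow> k \<in> {1..N} \<Longrightarrow> hk j (al k) = (if j = k then 1 else 0)"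
  unfolding hk_def using hat_at_al by blast

lemma ftc_hd:
  assumes j: "j \<in> {1..N}" and k: "k \<in> {1..N}" and uv: "u \<le> v"
  shows "(hd j k has_integral (hk j v * hk k v - hk j u * hk k u)) {u..v}"
proof (rule fundamental_theorem_of_calculus_interior_strong[OF finite_Ex uv])
  fix x assume "x \<in> {u<..<v} - Ex"
  then show "((\<lambda>t. hk j t * hk k t) has_vector_derivative hd j k x) (at x)"
    using hk_prod_deriv[OF j k] has_real_derivative_iff_has_vector_derivative by blast
next
  show "continuous_on {u..v} (\<lambda>t. hk j t * hk k t)"
    using hk_cont[OF j] hk_cont[OF k] by (intro continuous_intros) auto
qed

lemma crux:
  assumes j: "j \<in> {1..N}" and k: "k \<in> {1..N}"
  shows "((\<lambda>x. P x * hd j k x) has_integral (if j = k then pl k - pr k else 0)) {0..1}"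
proof -
  obtain T1 where T1: "negligible T1" "\<forall>t\<in>{g k..al k} - T1. P t = pl k"
    using P_left[OF k] by blast
  obtain T2 where T2: "negligible T2" "\<forall>t\<in>{al k..dl k} - T2. P t = pr k"
    using P_right[OF k] by blast
  note gk = gad[OF k]
  have i1: "(hd j k has_integral (if j = k then 1 else 0)) {g k..al k}"
    using ftc_hd[OF j k, of "g k" "al k"] gk hk_g[OF k] hk_al[OF j k] hk_al[OF k k] by auto
  have i2: "(hd j k has_integral (if j = k then -1 else 0)) {al k..dl k}"
    using ftc_hd[OF j k, of "al k" "dl k"] gk hk_dl[OF k] hk_al[OF j k] hk_al[OF k k] by auto
  let ?Q1 = "\<lambda>x. if x \<in> {g k..al k} then pl k * hd j k x else 0"
  let ?Q2 = "\<lambda>x. if x \<in> {al k..dl k} then pr k * hd j k x else 0"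
  have q1: "(?Q1 has_integral pl k * (if j = k then 1 else 0)) {0..1}"
    using has_integral_restrict_closed_subintervals_eq[of "g k" "al k" 0 1 "\<lambda>x. pl k * hd j k x"]
      has_integral_mult_right[OF i1, of "pl k"] gk by auto
  have q2: "(?Q2 has_integral pr k * (if j = k then -1 else 0)) {0..1}"
    using has_integral_restrict_closed_subintervals_eq[of "al k" "dl k" 0 1 "\<lambda>x. pr k * hd j k x"]
      has_integral_mult_right[OF i2, of "pr k"] gk by auto
  have q: "((\<lambda>x. ?Q1 x + ?Q2 x) has_integral (if j = k then pl k - pr k else 0)) {0..1}"
    using has_integral_add[OF q1 q2] by (auto split: if_splits)
  show ?thesis
  proof (rule has_integral_spike[OF _ _ q])
    show "negligible (T1 \<union> T2 \<union> {al k})" using T1(1) T2(1) by auto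
    fix x assume x: "x \<in> {0..1} - (T1 \<union> T2 \<union> {al k})"
    consider "x \<le> g k \<or> dl k \<le> x" | "g k < x \<and> x < al k" | "al k < x \<and> x < dl k"
      using x by force
    then show "P x * hd j k x = ?Q1 x + ?Q2 x"
    proof cases
      case 1 then show ?thesis using hd_out[OF j k, of x] by simp
    next
      case 2 then show ?thesis using T1(2) x by auto
    next
      case 3 then show ?thesis using T2(2) x by auto
    qed
  qed
qed

lemma zeta_eq: "k \<in> {1..N} \<Longrightarrow> zeta d beta n m k = pr k - pl k"
  by (auto simp: zeta_def pr_def pl_def)

end


lemma of_real_vd:
  assumes "(f has_real_derivative D) (at x)"
  shows "((\<lambda>t. complex_of_real (f t)) has_vector_derivative complex_of_real D) (at x)"
proof -
  have "((\<lambda>t. f t *\<^sub>R (1::complex)) has_vector_derivative f x *\<^sub>R 0 + D *\<^sub>R 1) (at x)"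
    using assms by (intro has_vector_derivative_scaleR has_vector_derivative_const)
  then show ?thesis by (simp add: scaleR_conv_of_real)
qed

definition Ind :: "real \<Rightarrow> real \<Rightarrow> real \<Rightarrow> real" where
  "Ind u v x = (if u < x \<and> x < v then 1 else 0)"

lemma Ind_int: "Ind u v integrable_on {0..1}"
proof -
  have "(\<lambda>x::real. 1::real) integrable_on {u..v} \<inter> {0..1}"
    by (simp add: Int_atLeastAtMost integrable_const_ivl del: max_def min_def)
  then have "(\<lambda>x. if x \<in> {u..v} then (1::real) else 0) integrable_on {0..1}"
    unfolding integrable_restrict_Int .
  then show ?thesis
    by (rule integrable_spike_finite[of "{u, v}", rotated 2]) (auto simp: Ind_def)
qed

lemma Ind_mult: "Ind u v x * Ind u' v' x = Ind (max u u') (min v v') x"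
  by (auto simp: Ind_def)

lemma Ind2_int: "(\<lambda>x. (p * Ind u v x + q * Ind u' v' x) * (r * Ind s t x + w * Ind s' t' x)) integrable_on {0..1}"
proof -
  have e: "(\<lambda>x. (p * Ind u v x + q * Ind u' v' x) * (r * Ind s t x + w * Ind s' t' x)) =
    (\<lambda>x. (p * r) * Ind (max u s) (min v t) x + (p * w) * Ind (max u s') (min v t') x
       + (q * r) * Ind (max u' s) (min v' t) x + (q * w) * Ind (max u' s') (min v' t') x)"
    by (rule ext) (simp add: Ind_mult[symmetric] algebra_simps)
  show ?thesis unfolding e
    by (intro integrable_add integrable_on_mult_right Ind_int)
qed

context sset2 begin

lemma ebasis_hk: "ebasis a n m k x = complex_of_real (hk k x)"
  by (simp add: ebasis_def hk_def)

definition Y where "Y c = (\<lambda>x. \<Sum>k=1..n-1. c k * ebasis a n m k x)"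
definition Y' where "Y' c x = (\<Sum>k=1..N. c k * complex_of_real (hdk k x))"

lemma Y_alt: "Y c x = (\<Sum>k=1..N. c k * complex_of_real (hk k x))"
  by (simp add: Y_def ebasis_hk)

lemma Y_deriv: "x \<notin> Ex \<Longrightarrow> (Y c has_vector_derivative Y' c x) (at x)"
  unfolding Y_alt[abs_def] Y'_def
  by (intro has_vector_derivative_sum has_vector_derivative_mult_right of_real_vd hk_deriv) auto

lemma vd_Y: "x \<notin> Ex \<Longrightarrow> vector_derivative (Y c) (at x) = Y' c x"
  using Y_deriv vector_derivative_at by blast

lemma vd_prod: "x \<notin> Ex \<Longrightarrow> vector_derivative (\<lambda>t. Y c t * cnj (Y b t)) (at x)
     = Y c x * cnj (Y' b x) + Y' c x * cnj (Y b x)"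
  by (intro vector_derivative_at has_vector_derivative_mult has_vector_derivative_cnj Y_deriv)

lemma exp1: "Y' c x * cnj (Y' b x) =
   (\<Sum>j=1..N. \<Sum>k=1..N. c j * cnj (b k) * complex_of_real (hdk j x * hdk k x))"
  unfolding Y'_def cnj_sum sum_product
  by (intro sum.cong refl) (simp add: algebra_simps)

lemma exp2: "Y c x * cnj (Y' b x) + Y' c x * cnj (Y b x) =
   (\<Sum>j=1..N. \<Sum>k=1..N. c j * cnj (b k) * complex_of_real (hd j k x))"
  unfolding Y'_def Y_alt cnj_sum sum_product hd_def sum.distrib[symmetric]
  by (intro sum.cong refl) (simp add: algebra_simps)

lemma hdk_Ind: "k \<in> {1..N} \<Longrightarrow>
   hdk k x = 1 / (al k - g k) * Ind (g k) (al k) x + (- 1 / (dl k - al k)) * Ind (al k) (dl k) x"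
  using gad[of k] by (auto simp: hdk_def hatd_def Ind_def)

lemma hdk_prod_int:
  assumes j: "j \<in> {1..N}" and k: "k \<in> {1..N}"
  shows "(\<lambda>x. hdk j x * hdk k x) integrable_on {0..1}"
proof -
  have "(\<lambda>x. (1 / (al j - g j) * Ind (g j) (al j) x + (- 1 / (dl j - al j)) * Ind (al j) (dl j) x)
           * (1 / (al k - g k) * Ind (g k) (al k) x + (- 1 / (dl k - al k)) * Ind (al k) (dl k) x))
        integrable_on {0..1}"
    by (rule Ind2_int)
  then show ?thesis using hdk_Ind[OF j] hdk_Ind[OF k] by simp
qed

definition G where "G j k = integral {0..1} (\<lambda>x. hdk j x * hdk k x)"

lemma of_real_int: "(f has_integral i) S \<Longrightarrow> ((\<lambda>x. complex_of_real (f x)) has_integral complex_of_real i) S"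
  using has_integral_linear[OF _ bounded_linear_of_real] by (auto simp: o_def)

lemma F1_int: "((\<lambda>x. \<Sum>j=1..N. \<Sum>k=1..N. c j * cnj (b k) * complex_of_real (hdk j x * hdk k x))
   has_integral (\<Sum>j=1..N. \<Sum>k=1..N. c j * cnj (b k) * complex_of_real (G j k))) {0..1}"
  unfolding G_def
  by (intro has_integral_sum finite_atLeastAtMost has_integral_mult_right of_real_int
       integrable_integral hdk_prod_int) auto

lemma ipH_Y: "ipH (Y c) (Y b) = (\<Sum>j=1..N. \<Sum>k=1..N. c j * cnj (b k) * complex_of_real (G j k))"
proof -
  have "((\<lambda>x. vector_derivative (Y c) (at x) * cnj (vector_derivative (Y b) (at x))) has_integral
     (\<Sum>j=1..N. \<Sum>k=1..N. c j * cnj (b k) * complex_of_real (G j k))) {0..1}"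
    by (rule has_integral_spike[OF negligible_finite[OF finite_Ex] _ F1_int])
       (simp add: vd_Y exp1)
  then show ?thesis unfolding ipH_def by (rule integral_unique)
qed

lemma F2_int: "((\<lambda>x. \<Sum>j=1..N. \<Sum>k=1..N. c j * cnj (b k) * complex_of_real (lam * (P x * hd j k x)))
   has_integral (\<Sum>j=1..N. \<Sum>k=1..N. c j * cnj (b k) *
       complex_of_real (lam * (if j = k then pl k - pr k else 0)))) {0..1}"
  by (intro has_integral_sum finite_atLeastAtMost has_integral_mult_right of_real_int crux) auto

lemma sum_delta_aux: "(\<Sum>j=1..N. \<Sum>k=1..N. c j * cnj (b k) *
       complex_of_real (lam * (if j = k then pl k - pr k else 0)))
  = - complex_of_real lam * (\<Sum>k=1..N. c k * cnj (b k) * complex_of_real (zeta d beta n m k))"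
proof -
  have "(\<Sum>j=1..N. \<Sum>k=1..N. c j * cnj (b k) *
       complex_of_real (lam * (if j = k then pl k - pr k else 0)))
     = (\<Sum>j=1..N. \<Sum>k=1..N. if j = k then c j * cnj (b j) * complex_of_real (lam * (pl j - pr j)) else 0)"
    by (intro sum.cong refl) auto
  also have "\<dots> = (\<Sum>j=1..N. c j * cnj (b j) * complex_of_real (lam * (pl j - pr j)))"
    by (simp add: sum.delta)
  also have "\<dots> = (\<Sum>j=1..N. - complex_of_real lam * (c j * cnj (b j) * complex_of_real (zeta d beta n m j)))"
    by (intro sum.cong refl) (simp add: zeta_eq algebra_simps)
  finally show ?thesis by (simp add: sum_distrib_left)
qed

lemma Cform_Y: "Cform P lam (Y c) (Y b) =
   ipH (Y c) (Y b) - complex_of_real lam * (\<Sum>k=1..N. c k * cnj (b k) * complex_of_real (zeta d beta n m k))"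
proof -
  have "((\<lambda>x. vector_derivative (Y c) (at x) * cnj (vector_derivative (Y b) (at x))
       + complex_of_real (lam * P x) * vector_derivative (\<lambda>t. Y c t * cnj (Y b t)) (at x)) has_integral
     (\<Sum>j=1..N. \<Sum>k=1..N. c j * cnj (b k) * complex_of_real (G j k))
     + (\<Sum>j=1..N. \<Sum>k=1..N. c j * cnj (b k) *
       complex_of_real (lam * (if j = k then pl k - pr k else 0)))) {0..1}"
  proof (rule has_integral_spike[OF negligible_finite[OF finite_Ex] _ has_integral_add[OF F1_int F2_int]])
    fix x assume x: "x \<in> {0..1} - Ex"
    have "complex_of_real (lam * P x) * (\<Sum>j=1..N. \<Sum>k=1..N. c j * cnj (b k) * complex_of_real (hd j k x))
       = (\<Sum>j=1..N. \<Sum>k=1..N. c j * cnj (b k) * complex_of_real (lam * (P x * hd j k x)))"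
      unfolding sum_distrib_left by (intro sum.cong refl) (simp add: algebra_simps)
    then show "vector_derivative (Y c) (at x) * cnj (vector_derivative (Y b) (at x))
       + complex_of_real (lam * P x) * vector_derivative (\<lambda>t. Y c t * cnj (Y b t)) (at x)
      = (\<Sum>j=1..N. \<Sum>k=1..N. c j * cnj (b k) * complex_of_real (hdk j x * hdk k x))
      + (\<Sum>j=1..N. \<Sum>k=1..N. c j * cnj (b k) * complex_of_real (lam * (P x * hd j k x)))"
      using x by (simp add: vd_Y vd_prod exp1 exp2)
  qed
  then show ?thesis unfolding Cform_def ipH_Y[symmetric] sum_delta_aux
    by (simp add: integral_unique)
qed

lemma G_sym: "G j k = G k j" unfolding G_def by (simp add: mult.commute)

end


definition Bf :: "(nat \<Rightarrow> nat \<Rightarrow> real) \<Rightarrow> nat \<Rightarrow> (nat \<Rightarrow> complex) \<Rightarrow> (nat \<Rightarrow> complex) \<Rightarrow> complex" where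
  "Bf G N c e = (\<Sum>j=1..N. \<Sum>k=1..N. c j * cnj (e k) * complex_of_real (G j k))"

definition sqn :: "nat \<Rightarrow> (nat \<Rightarrow> complex) \<Rightarrow> real" where
  "sqn N c = (\<Sum>k=1..N. (cmod (c k))\<^sup>2)"

lemma Bf_herm: "(\<And>j k. G j k = G k j) \<Longrightarrow> Bf G N e c = cnj (Bf G N c e)"
  unfolding Bf_def cnj_sum
  by (subst sum.swap) (auto intro!: sum.cong simp: mult.commute)

lemma Bf_lin1: "Bf G N (\<lambda>k. c k + t * e k) f = Bf G N c f + t * Bf G N e f"
  unfolding Bf_def sum_distrib_left sum.distrib[symmetric]
  by (intro sum.cong refl) (simp add: algebra_simps)

lemma Bf_diff1: "Bf G N (\<lambda>k. c k - e k) f = Bf G N c f - Bf G N e f"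
  unfolding Bf_def sum_subtractf[symmetric]
  by (intro sum.cong refl) (simp add: algebra_simps)

lemma Bf_lin2: "Bf G N f (\<lambda>k. c k + t * e k) = Bf G N f c + cnj t * Bf G N f e"
  unfolding Bf_def sum_distrib_left sum.distrib[symmetric]
  by (intro sum.cong refl) (simp add: algebra_simps)

lemma sqn_nonneg: "sqn N c \<ge> 0" unfolding sqn_def by (intro sum_nonneg) auto

lemma coef_le_sqn: "k \<in> {1..N} \<Longrightarrow> cmod (c k) \<le> sqrt (sqn N c)"
proof -
  assume k: "k \<in> {1..N}"
  have "(cmod (c k))\<^sup>2 \<le> sqn N c"
    unfolding sqn_def by (rule member_le_sum) (use k in auto)
  then show ?thesis by (simp add: real_le_rsqrt)
qed

lemma Bf_bound: "cmod (Bf G N c e) \<le> (\<Sum>j=1..N. \<Sum>k=1..N. \<bar>G j k\<bar>) * (sqrt (sqn N c) * sqrt (sqn N e))"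
proof -
  have "cmod (Bf G N c e) \<le> (\<Sum>j=1..N. \<Sum>k=1..N. cmod (c j * cnj (e k) * complex_of_real (G j k)))"
    unfolding Bf_def by (rule order_trans[OF norm_sum sum_mono]) (rule norm_sum)
  also have "\<dots> \<le> (\<Sum>j=1..N. \<Sum>k=1..N. \<bar>G j k\<bar> * (sqrt (sqn N c) * sqrt (sqn N e)))"
  proof (intro sum_mono)
    fix j k assume j: "j \<in> {1..N}" and k: "k \<in> {1..N}"
    have ce: "cmod (c j) * cmod (e k) \<le> sqrt (sqn N c) * sqrt (sqn N e)"
      by (intro mult_mono coef_le_sqn j k) (auto simp: sqn_nonneg)
    then show "cmod (c j * cnj (e k) * complex_of_real (G j k)) \<le> \<bar>G j k\<bar> * (sqrt (sqn N c) * sqrt (sqn N e))"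
      using mult_left_mono[OF ce, of "\<bar>G j k\<bar>"] by (simp add: norm_mult ac_simps)
  qed
  also have "\<dots> = (\<Sum>j=1..N. \<Sum>k=1..N. \<bar>G j k\<bar>) * (sqrt (sqn N c) * sqrt (sqn N e))"
    by (simp add: sum_distrib_right)
  finally show ?thesis .
qed

lemma Bf_real: "(\<And>j k. G j k = G k j) \<Longrightarrow> Bf G N c c = complex_of_real (Re (Bf G N c c))"
  using Bf_herm[of G N c c] by (simp add: complex_eq_iff)

lemma Bf_CS:
  assumes sym: "\<And>j k. G j k = G k j" and psd: "\<And>c. Re (Bf G N c c) \<ge> 0"
  shows "(cmod (Bf G N c e))\<^sup>2 \<le> Re (Bf G N c c) * Re (Bf G N e e)"
proof -
  let ?b = "Bf G N c e"
  let ?Bcc = "Re (Bf G N c c)" and ?Bee = "Re (Bf G N e e)"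
  have key: "0 \<le> ?Bcc - 2 * r * (cmod ?b)\<^sup>2 + r\<^sup>2 * (cmod ?b)\<^sup>2 * ?Bee" for r :: real
  proof -
    define t where "t = - complex_of_real r * ?b"
    have "Bf G N (\<lambda>k. c k + t * e k) (\<lambda>k. c k + t * e k)
        = Bf G N c c + cnj t * ?b + t * Bf G N e c + t * cnj t * Bf G N e e"
      unfolding Bf_lin1 Bf_lin2 by (simp add: algebra_simps)
    also have "\<dots> = Bf G N c c + cnj t * ?b + t * cnj ?b + t * cnj t * Bf G N e e"
      using Bf_herm[of G N e c, OF sym] by simp
    finally have eq: "Bf G N (\<lambda>k. c k + t * e k) (\<lambda>k. c k + t * e k)
        = Bf G N c c + cnj t * ?b + t * cnj ?b + t * cnj t * Bf G N e e" .
    have bb: "cnj ?b * ?b = complex_of_real ((cmod ?b)\<^sup>2)" "?b * cnj ?b = complex_of_real ((cmod ?b)\<^sup>2)"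
      using complex_norm_square[of ?b] by (simp_all only: mult.commute)
    have "Re (Bf G N (\<lambda>k. c k + t * e k) (\<lambda>k. c k + t * e k))
       = ?Bcc - 2 * r * (cmod ?b)\<^sup>2 + r\<^sup>2 * (cmod ?b)\<^sup>2 * ?Bee"
    proof -
      have e1: "cnj t * ?b = - complex_of_real (r * (cmod ?b)\<^sup>2)"
        unfolding t_def using bb(1) by (simp add: mult.assoc)
      have e2: "t * cnj ?b = - complex_of_real (r * (cmod ?b)\<^sup>2)"
        unfolding t_def using bb(2) by (simp add: mult.assoc)
      have e3: "t * cnj t = complex_of_real (r\<^sup>2 * (cmod ?b)\<^sup>2)"
        unfolding t_def using bb(2) by (simp add: algebra_simps power2_eq_square)
      show ?thesis unfolding eq e1 e2 e3 by simp
    qed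
    then show ?thesis using psd[of "\<lambda>k. c k + t * e k"] by simp
  qed
  show ?thesis
  proof (cases "?Bee > 0")
    case True
    have "0 \<le> ?Bcc - 2 * (1 / ?Bee) * (cmod ?b)\<^sup>2 + (1 / ?Bee)\<^sup>2 * (cmod ?b)\<^sup>2 * ?Bee"
      by (rule key)
    also have "\<dots> = ?Bcc - (cmod ?b)\<^sup>2 / ?Bee"
      using True by (simp add: power2_eq_square field_simps)
    finally have "(cmod ?b)\<^sup>2 / ?Bee \<le> ?Bcc" by simp
    then show ?thesis using True by (simp add: divide_simps mult.commute)
  next
    case False
    then have z: "?Bee = 0" using psd[of e] by simp
    show ?thesis
    proof (rule ccontr)
      assume "\<not> ?thesis"
      then have pos: "(cmod ?b)\<^sup>2 > 0" using z by simp
      have "0 \<le> ?Bcc - 2 * ((?Bcc + 1) / (2 * (cmod ?b)\<^sup>2)) * (cmod ?b)\<^sup>2"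
        using key[of "(?Bcc + 1) / (2 * (cmod ?b)\<^sup>2)"] z by simp
      also have "\<dots> = -1" using pos by (simp add: field_simps)
      finally show False by simp
    qed
  qed
qed


lemma linsolve:
  fixes M :: "nat \<Rightarrow> nat \<Rightarrow> complex" and r :: "nat \<Rightarrow> complex"
  assumes inj: "\<And>x. (\<forall>k\<in>{1..N}. (\<Sum>j=1..N. M k j * x j) = 0) \<Longrightarrow> (\<forall>k\<in>{1..N}. x k = 0)"
  shows "\<exists>x. \<forall>k\<in>{1..N}. (\<Sum>j=1..N. M k j * x j) = r k"
proof -
  define A where "A = Matrix.mat N N (\<lambda>(i,j). M (Suc i) (Suc j))"
  have A: "A \<in> carrier_mat N N" by (simp add: A_def)
  have mv: "vec_index (A *\<^sub>v v) i = (\<Sum>j=1..N. M (Suc i) j * vec_index v (j - 1))"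
    if "i < N" "v \<in> carrier_vec N" for v i
  proof -
    have "vec_index (A *\<^sub>v v) i = (\<Sum>j<N. M (Suc i) (Suc j) * vec_index v j)"
      using that by (simp add: A_def scalar_prod_def atLeast0LessThan)
    also have "\<dots> = (\<Sum>j=1..N. M (Suc i) j * vec_index v (j - 1))"
      by (simp add: sum.atLeast1_atMost_eq)
    finally show ?thesis .
  qed
  have "det A \<noteq> 0"
  proof
    assume "det A = 0"
    then obtain v where v: "v \<in> carrier_vec N" "v \<noteq> 0\<^sub>v N" "A *\<^sub>v v = 0\<^sub>v N"
      using det_0_iff_vec_prod_zero_field[OF A] by auto
    define x where "x j = vec_index v (j - 1)" for j
    have "\<forall>k\<in>{1..N}. (\<Sum>j=1..N. M k j * x j) = 0"
    proof
      fix k assume k: "k \<in> {1..N}"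
      have kk: "k - 1 < N" "Suc (k - 1) = k" using k by auto
      have "vec_index (A *\<^sub>v v) (k - 1) = 0" using v(3) kk by auto
      then show "(\<Sum>j=1..N. M k j * x j) = 0" using mv[OF kk(1) v(1)] kk by (simp add: x_def)
    qed
    then have "\<forall>k\<in>{1..N}. x k = 0" by (rule inj)
    then have "v = 0\<^sub>v N"
      using v(1) by (intro eq_vecI) (auto simp: x_def dest!: bspec[of _ _ "Suc _"])
    then show False using v(2) by simp
  qed
  then have "A \<in> Units (ring_mat TYPE(complex) N ())" by (rule det_non_zero_imp_unit[OF A])
  then obtain B where B: "B \<in> carrier_mat N N" "A * B = 1\<^sub>m N"
    by (auto simp: Units_def ring_mat_def)
  define rv where "rv = Matrix.vec N (\<lambda>i. r (Suc i))"
  define v where "v = B *\<^sub>v rv"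
  have vc: "v \<in> carrier_vec N" using B by (simp add: v_def rv_def)
  have "A *\<^sub>v v = rv"
    unfolding v_def using A B by (simp add: assoc_mult_mat_vec[symmetric] rv_def)
  show ?thesis
  proof (intro exI ballI)
    fix k assume k: "k \<in> {1..N}"
    have kk: "k - 1 < N" "Suc (k - 1) = k" using k by auto
    have "vec_index (A *\<^sub>v v) (k - 1) = r k" using \<open>A *\<^sub>v v = rv\<close> kk by (simp add: rv_def)
    then show "(\<Sum>j=1..N. M k j * vec_index v (j - 1)) = r k" using mv[OF kk(1) vc] kk by simp
  qed
qed

context sset2 begin

lemma H2_eq: "H2 a n m = range Y"
  by (auto simp: H2_def Y_def)

lemma ipH_B: "ipH (Y c) (Y b) = Bf G N c b"
  by (simp add: ipH_Y Bf_def)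

lemma normH_Y: "normH (Y c) = sqrt (Re (Bf G N c c))"
  by (simp add: normH_def ipH_B)

lemma psd: "Re (Bf G N c c) \<ge> 0"
proof -
  have "((\<lambda>x. \<Sum>j=1..N. \<Sum>k=1..N. c j * cnj (c k) * complex_of_real (hdk j x * hdk k x))
     has_integral Bf G N c c) {0..1}"
    using F1_int[of c c] by (simp add: Bf_def)
  then have "((\<lambda>x. Y' c x * cnj (Y' c x)) has_integral Bf G N c c) {0..1}"
    by (simp add: exp1)
  from has_integral_linear[OF this bounded_linear_Re]
  have "((\<lambda>x. Re (Y' c x * cnj (Y' c x))) has_integral Re (Bf G N c c)) {0..1}"
    by (simp add: o_def)
  then show ?thesis by (rule has_integral_nonneg) (simp add: complex_mult_cnj)
qed

lemma Y_eq: "(\<And>k. k \<in> {1..N} \<Longrightarrow> c k = c' k) \<Longrightarrow> Y c = Y c'"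
  unfolding Y_def by (intro ext sum.cong) auto

end

locale sset3 = sset2 +
  fixes C :: "real \<Rightarrow> (real \<Rightarrow> complex) \<Rightarrow> (real \<Rightarrow> complex)"
  assumes Cmaps: "\<forall>lam. \<forall>y\<in>H2 a n m. C lam y \<in> H2 a n m"
    and Cf: "\<forall>lam. \<forall>y\<in>H2 a n m. \<forall>z\<in>H2 a n m. ipH (C lam y) z = Cform P lam y z"
    and Z: "Zplus d beta n m + Zminus d beta n m = n - 1"
begin

abbreviation "z k \<equiv> zeta d beta n m k"
definition "K1 = (\<Sum>j=1..N. \<Sum>k=1..N. \<bar>G j k\<bar>) + 1"
definition "mu = Min ((\<lambda>k. \<bar>z k\<bar>) ` {1..N})"
definition sig where "sig c = (\<lambda>k. complex_of_real (sgn (z k)) * c k)"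

lemma K1_pos: "K1 > 0" unfolding K1_def by (simp add: add_nonneg_pos sum_nonneg)

lemma Bf_bnd: "cmod (Bf G N c e) \<le> K1 * (sqrt (sqn N c) * sqrt (sqn N e))"
proof -
  have "cmod (Bf G N c e) \<le> (\<Sum>j=1..N. \<Sum>k=1..N. \<bar>G j k\<bar>) * (sqrt (sqn N c) * sqrt (sqn N e))"
    by (rule Bf_bound)
  also have "\<dots> \<le> K1 * (sqrt (sqn N c) * sqrt (sqn N e))"
    unfolding K1_def by (intro mult_right_mono) (auto simp: sqn_nonneg)
  finally show ?thesis .
qed

lemma z_nz: "k \<in> {1..N} \<Longrightarrow> z k \<noteq> 0"
proof -
  let ?A = "{k \<in> {1..N}. z k > 0}" and ?B = "{k \<in> {1..N}. z k < 0}"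
  have "card (?A \<union> ?B) = card ?A + card ?B" by (rule card_Un_disjoint) auto
  also have "\<dots> = card {1..N}" using Z by (simp add: Zplus_def Zminus_def)
  finally have eq: "?A \<union> ?B = {1..N}" by (intro card_subset_eq) auto
  assume k: "k \<in> {1..N}"
  then have "k \<in> ?A \<union> ?B" by (simp only: eq)
  then show "z k \<noteq> 0" by auto
qed

lemma N_pos: "1 \<in> {1..N}" using n2 by auto

lemma mu_pos: "mu > 0"
proof -
  have "mu \<in> (\<lambda>k. \<bar>z k\<bar>) ` {1..N}" unfolding mu_def
    using N_pos by (intro Min_in) auto
  then show ?thesis using z_nz by auto
qed

lemma mu_le: "k \<in> {1..N} \<Longrightarrow> mu \<le> \<bar>z k\<bar>"
  unfolding mu_def by (intro Min_le) auto

lemma sig_sqn: "sqn N (sig c) = sqn N c"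
  unfolding sqn_def sig_def
  by (intro sum.cong refl) (simp add: norm_mult z_nz)

lemma sig_sum1: "(\<Sum>k=1..N. c k * cnj (sig c k) * complex_of_real (z k))
    = complex_of_real (\<Sum>k=1..N. (cmod (c k))\<^sup>2 * \<bar>z k\<bar>)"
  unfolding of_real_sum
proof (intro sum.cong refl)
  fix k
  have h1: "c k * cnj (c k) = complex_of_real ((cmod (c k))\<^sup>2)"
    using complex_norm_square[of "c k"] by simp
  have h2: "sgn (z k) * z k = \<bar>z k\<bar>" by (simp add: sgn_if abs_if)
  have "c k * cnj (sig c k) * complex_of_real (z k) = (c k * cnj (c k)) * complex_of_real (sgn (z k) * z k)"
    unfolding sig_def by (simp add: algebra_simps)
  also have "\<dots> = complex_of_real ((cmod (c k))\<^sup>2) * complex_of_real \<bar>z k\<bar>" by (simp only: h1 h2)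
  finally show "c k * cnj (sig c k) * complex_of_real (z k) = complex_of_real ((cmod (c k))\<^sup>2 * \<bar>z k\<bar>)"
    by simp
qed

lemma sig_sum2: "(\<Sum>k=1..N. sig c k * cnj (c k) * complex_of_real (z k))
    = complex_of_real (\<Sum>k=1..N. (cmod (c k))\<^sup>2 * \<bar>z k\<bar>)"
  unfolding sig_sum1[symmetric] by (intro sum.cong refl) (simp add: sig_def mult.commute mult.left_commute)

lemma W_lower: "mu * sqn N c \<le> (\<Sum>k=1..N. (cmod (c k))\<^sup>2 * \<bar>z k\<bar>)"
  unfolding sqn_def sum_distrib_left
  by (intro sum_mono) (use mu_le in \<open>auto intro!: mult_right_mono simp: mult.commute\<close>)

lemma sqn_zero: "sqn N c = 0 \<Longrightarrow> k \<in> {1..N} \<Longrightarrow> c k = 0"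
  unfolding sqn_def by (subst (asm) sum_nonneg_eq_0_iff) auto

lemma Cform_B: "Cform P lam (Y c) (Y b) = Bf G N c b - complex_of_real lam * (\<Sum>k=1..N. c k * cnj (b k) * complex_of_real (z k))"
  by (simp add: Cform_Y ipH_B)

lemma YH: "Y c \<in> H2 a n m" by (simp add: H2_eq)

lemma C_Y: "\<exists>c'. C lam (Y c) = Y c'"
  using Cmaps YH by (auto simp: H2_eq)

lemma ND: assumes "\<And>e. Bf G N c e = 0" shows "k \<in> {1..N} \<Longrightarrow> c k = 0"
proof -
  obtain v' where v': "C 1 (Y (sig c)) = Y v'" using C_Y by blast
  have "ipH (C 1 (Y (sig c))) (Y c) = Cform P 1 (Y (sig c)) (Y c)" using Cf YH by blast
  then have "Bf G N v' c = Bf G N (sig c) c - (\<Sum>k=1..N. sig c k * cnj (c k) * complex_of_real (z k))"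
    by (simp add: v' ipH_B Cform_B)
  moreover have "Bf G N v' c = 0" using Bf_herm[of G N v' c] G_sym assms by auto
  moreover have "Bf G N (sig c) c = 0" using Bf_herm[of G N "sig c" c] G_sym assms by auto
  ultimately have "(\<Sum>k=1..N. sig c k * cnj (c k) * complex_of_real (z k)) = 0" by simp
  then have "complex_of_real (\<Sum>k=1..N. (cmod (c k))\<^sup>2 * \<bar>z k\<bar>) = 0" by (simp only: sig_sum2)
  then have "(\<Sum>k=1..N. (cmod (c k))\<^sup>2 * \<bar>z k\<bar>) = 0" by (simp only: of_real_eq_0_iff)
  then have "mu * sqn N c \<le> 0" using W_lower[of c] by simp
  then have "sqn N c = 0" using mu_pos sqn_nonneg[of N c] by (simp add: mult_le_0_iff)
  then show "k \<in> {1..N} \<Longrightarrow> c k = 0" by (rule sqn_zero)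
qed

lemma CORE:
  assumes lam: "lam * mu > K1" and eq: "Bf G N c (sig c) = complex_of_real lam * (\<Sum>k=1..N. c k * cnj (sig c k) * complex_of_real (z k))"
  shows "k \<in> {1..N} \<Longrightarrow> c k = 0"
proof -
  have l0: "lam \<ge> 0" using lam K1_pos mu_pos by (smt (verit) mult_nonpos_nonneg)
  let ?W = "\<Sum>k=1..N. (cmod (c k))\<^sup>2 * \<bar>z k\<bar>"
  have "Bf G N c (sig c) = complex_of_real (lam * ?W)" using eq by (simp only: sig_sum1 of_real_mult)
  moreover have "lam * ?W \<ge> 0" using l0 by (simp add: sum_nonneg)
  ultimately have "lam * ?W = cmod (Bf G N c (sig c))" by (metis abs_of_nonneg norm_of_real)
  also have "\<dots> \<le> K1 * sqn N c" using Bf_bnd[of c "sig c"] unfolding sig_sqn real_sqrt_mult_self abs_of_nonneg[OF sqn_nonneg] .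
  finally have "lam * ?W \<le> K1 * sqn N c" .
  moreover have "lam * (mu * sqn N c) \<le> lam * ?W" using mult_left_mono[OF W_lower[of c] l0] .
  ultimately have "(lam * mu) * sqn N c \<le> K1 * sqn N c" by (simp add: mult.assoc)
  then have "sqn N c = 0"
  proof -
    assume h: "(lam * mu) * sqn N c \<le> K1 * sqn N c"
    show ?thesis
    proof (rule ccontr)
      assume "sqn N c \<noteq> 0"
      then have "sqn N c > 0" using sqn_nonneg[of N c] by simp
      then have "K1 * sqn N c < (lam * mu) * sqn N c" by (rule mult_strict_right_mono[OF lam])
      then show False using h by simp
    qed
  qed
  then show "k \<in> {1..N} \<Longrightarrow> c k = 0" by (rule sqn_zero)
qed

end


context sset3 begin

lemma Bf_swap: "Bf G N x e = (\<Sum>k=1..N. cnj (e k) * (\<Sum>j=1..N. complex_of_real (G j k) * x j))"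
  unfolding Bf_def sum_distrib_left
  by (subst sum.swap) (intro sum.cong refl, simp add: algebra_simps)

lemma inj_C: assumes lam: "lam * mu > K1" shows "inj_on (C lam) (H2 a n m)"
proof (rule inj_onI)
  fix y1 y2 assume y1: "y1 \<in> H2 a n m" and y2: "y2 \<in> H2 a n m" and eq: "C lam y1 = C lam y2"
  obtain c1 c2 where c: "y1 = Y c1" "y2 = Y c2" using y1 y2 by (auto simp: H2_eq)
  define c where "c = (\<lambda>k. c1 k - c2 k)"
  have "Cform P lam (Y c1) (Y (sig c)) = Cform P lam (Y c2) (Y (sig c))"
    using Cf y1 y2 YH eq c by metis
  then have "Bf G N c1 (sig c) - Bf G N c2 (sig c) = complex_of_real lam *
     ((\<Sum>k=1..N. c1 k * cnj (sig c k) * complex_of_real (z k)) - (\<Sum>k=1..N. c2 k * cnj (sig c k) * complex_of_real (z k)))"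
    unfolding Cform_B by (simp add: algebra_simps)
  then have "Bf G N c (sig c) = complex_of_real lam * (\<Sum>k=1..N. c k * cnj (sig c k) * complex_of_real (z k))"
    unfolding c_def Bf_diff1 sum_subtractf[symmetric] by (simp add: algebra_simps)
  from CORE[OF lam this] have "\<And>k. k \<in> {1..N} \<Longrightarrow> c1 k = c2 k" by (simp add: c_def)
  then show "y1 = y2" using c Y_eq by metis
qed

lemma surj_C: assumes lam: "lam * mu > K1" shows "H2 a n m \<subseteq> C lam ` H2 a n m"
proof
  fix w assume "w \<in> H2 a n m"
  then obtain b where b: "w = Y b" by (auto simp: H2_eq)
  define M where "M k j = complex_of_real (G j k) - (if j = k then complex_of_real (lam * z k) else 0)" for k j
  define r where "r k = (\<Sum>j=1..N. complex_of_real (G j k) * b j)" for k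
  have IDM: "(\<Sum>j=1..N. M k j * x j) = (\<Sum>j=1..N. complex_of_real (G j k) * x j) - complex_of_real (lam * z k) * x k"
    if "k \<in> {1..N}" for k x
  proof -
    have "(\<Sum>j=1..N. M k j * x j) = (\<Sum>j=1..N. complex_of_real (G j k) * x j)
        - (\<Sum>j=1..N. if j = k then complex_of_real (lam * z k) * x j else 0)"
      unfolding M_def sum_subtractf[symmetric] by (intro sum.cong refl) (simp add: algebra_simps)
    also have "(\<Sum>j=1..N. if j = k then complex_of_real (lam * z k) * x j else 0) = complex_of_real (lam * z k) * x k"
      using that by (simp add: sum.delta')
    finally show ?thesis .
  qed
  have ID: "Bf G N x e - complex_of_real lam * (\<Sum>k=1..N. x k * cnj (e k) * complex_of_real (z k))
      = (\<Sum>k=1..N. cnj (e k) * (\<Sum>j=1..N. M k j * x j))" for x e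
  proof -
    have "(\<Sum>k=1..N. cnj (e k) * (\<Sum>j=1..N. M k j * x j)) =
      (\<Sum>k=1..N. cnj (e k) * (\<Sum>j=1..N. complex_of_real (G j k) * x j) - complex_of_real lam * (x k * cnj (e k) * complex_of_real (z k)))"
    proof (intro sum.cong refl)
      fix k assume k: "k \<in> {1..N}"
      show "cnj (e k) * (\<Sum>j=1..N. M k j * x j) = cnj (e k) * (\<Sum>j=1..N. complex_of_real (G j k) * x j) - complex_of_real lam * (x k * cnj (e k) * complex_of_real (z k))"
        unfolding IDM[OF k] by (simp add: algebra_simps)
    qed
    also have "\<dots> = Bf G N x e - complex_of_real lam * (\<Sum>k=1..N. x k * cnj (e k) * complex_of_real (z k))"
      unfolding sum_subtractf Bf_swap sum_distrib_left ..
    finally show ?thesis by simp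
  qed
  have "\<exists>x. \<forall>k\<in>{1..N}. (\<Sum>j=1..N. M k j * x j) = r k"
  proof (rule linsolve)
    fix x assume h: "\<forall>k\<in>{1..N}. (\<Sum>j=1..N. M k j * x j) = 0"
    have "Bf G N x (sig x) - complex_of_real lam * (\<Sum>k=1..N. x k * cnj (sig x k) * complex_of_real (z k)) = 0"
      unfolding ID using h by simp
    then show "\<forall>k\<in>{1..N}. x k = 0" using CORE[OF lam] by simp
  qed
  then obtain c where c: "\<And>k. k \<in> {1..N} \<Longrightarrow> (\<Sum>j=1..N. M k j * c j) = r k" by blast
  obtain c' where c': "C lam (Y c) = Y c'" using C_Y by blast
  have "Bf G N c' e = Bf G N b e" for e
  proof -
    have "Bf G N c' e = Cform P lam (Y c) (Y e)" using Cf YH c' ipH_B by metis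
    also have "\<dots> = (\<Sum>k=1..N. cnj (e k) * (\<Sum>j=1..N. M k j * c j))" unfolding Cform_B ID ..
    also have "\<dots> = (\<Sum>k=1..N. cnj (e k) * r k)"
    proof (intro sum.cong refl)
      fix k assume k: "k \<in> {1..N}"
      show "cnj (e k) * (\<Sum>j=1..N. M k j * c j) = cnj (e k) * r k" unfolding c[OF k] ..
    qed
    also have "\<dots> = Bf G N b e" unfolding Bf_swap r_def ..
    finally show ?thesis .
  qed
  then have "\<And>e. Bf G N (\<lambda>k. c' k - b k) e = 0" by (simp add: Bf_diff1)
  then have "\<And>k. k \<in> {1..N} \<Longrightarrow> c' k = b k" using ND by fastforce
  then have "Y c' = Y b" by (rule Y_eq)
  then show "w \<in> C lam ` H2 a n m" using b c' YH by (metis image_eqI)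
qed

lemma normH_nonneg: "normH (Y c) \<ge> 0" unfolding normH_Y by (rule real_sqrt_ge_zero[OF psd])

lemma Re_le: "Re (Bf G N c c) \<le> K1 * sqn N c"
  using complex_Re_le_cmod[of "Bf G N c c"] Bf_bnd[of c c]
  unfolding real_sqrt_mult_self abs_of_nonneg[OF sqn_nonneg] by linarith

lemma keybound:
  assumes lp: "lam > 0" and lam: "lam * mu \<ge> 2 * K1"
  shows "normH (Y c) \<le> (2 * K1 / (mu * lam)) * normH (C lam (Y c))"
proof -
  obtain c' where c': "C lam (Y c) = Y c'" using C_Y by blast
  let ?s = "sqn N c" and ?W = "\<Sum>k=1..N. (cmod (c k))\<^sup>2 * \<bar>z k\<bar>" and ?h = "normH (Y c')"
  have "Bf G N c' (sig c) = Cform P lam (Y c) (Y (sig c))" using Cf YH c' ipH_B by metis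
  then have "Bf G N c' (sig c) = Bf G N c (sig c) - complex_of_real (lam * ?W)"
    unfolding Cform_B sig_sum1 by simp
  then have "complex_of_real (lam * ?W) = Bf G N c (sig c) - Bf G N c' (sig c)" by (simp add: algebra_simps)
  then have "cmod (complex_of_real (lam * ?W)) \<le> cmod (Bf G N c (sig c)) + cmod (Bf G N c' (sig c))"
    by (metis norm_triangle_ineq4)
  moreover have W0: "lam * ?W \<ge> 0" using lp by (simp add: sum_nonneg)
  moreover have "cmod (complex_of_real (lam * ?W)) = lam * ?W"
    by (simp only: norm_of_real abs_of_nonneg[OF W0])
  ultimately have A1: "lam * ?W \<le> cmod (Bf G N c (sig c)) + cmod (Bf G N c' (sig c))"
    by linarith
  have A2: "cmod (Bf G N c (sig c)) \<le> K1 * ?s"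
    using Bf_bnd[of c "sig c"] unfolding sig_sqn real_sqrt_mult_self abs_of_nonneg[OF sqn_nonneg] .
  have "(cmod (Bf G N c' (sig c)))\<^sup>2 \<le> Re (Bf G N c' c') * Re (Bf G N (sig c) (sig c))"
    by (rule Bf_CS[OF G_sym psd])
  then have "cmod (Bf G N c' (sig c)) \<le> sqrt (Re (Bf G N c' c')) * sqrt (Re (Bf G N (sig c) (sig c)))"
    by (simp add: real_le_rsqrt real_sqrt_mult[symmetric])
  also have "\<dots> \<le> ?h * sqrt (K1 * ?s)"
    using Re_le[of "sig c"] unfolding sig_sqn normH_Y
    by (intro mult_left_mono real_sqrt_le_mono) (use psd[of c'] in auto)
  finally have A3: "cmod (Bf G N c' (sig c)) \<le> ?h * sqrt (K1 * ?s)" .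
  have A4: "lam * (mu * ?s) \<le> lam * ?W" using mult_left_mono[OF W_lower[of c]] lp by simp
  define t where "t = sqrt (K1 * ?s)"
  have t0: "t \<ge> 0" using K1_pos sqn_nonneg[of N c] by (simp add: t_def)
  have tt: "t * t = K1 * ?s" using K1_pos sqn_nonneg[of N c] by (simp add: t_def)
  have h0: "?h \<ge> 0" by (rule normH_nonneg)
  have A: "lam * mu * ?s \<le> K1 * ?s + ?h * t" using A1 A2 A3 A4 by (simp add: t_def mult.assoc)
  have ny: "normH (Y c) \<le> t" unfolding normH_Y t_def using Re_le[of c] by (simp add: real_sqrt_le_mono)
  have mp: "mu * lam > 0" using mu_pos lp by simp
  have "t \<le> (2 * K1 / (mu * lam)) * ?h"
  proof (cases "t = 0")
    case True then show ?thesis using h0 K1_pos mp by simp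
  next
    case False
    then have tp: "t > 0" using t0 by simp
    have "K1 * (lam * mu * ?s) \<le> K1 * (K1 * ?s + ?h * t)" using A K1_pos by (simp add: mult_left_mono)
    then have "lam * mu * (t * t) \<le> K1 * (t * t) + K1 * ?h * t" unfolding tt by (simp add: algebra_simps)
    then have "(lam * mu * t) * t \<le> (K1 * t + K1 * ?h) * t" by (simp add: algebra_simps)
    then have B: "lam * mu * t \<le> K1 * t + K1 * ?h" using tp by simp
    have "K1 * t \<le> (lam * mu / 2) * t" using lam t0 by (intro mult_right_mono) auto
    then have "(lam * mu / 2) * t \<le> K1 * ?h" using B by simp
    then have "t \<le> (K1 * ?h) / (lam * mu / 2)" using mp by (simp add: field_simps)
    then show ?thesis by (simp add: field_simps)
  qed
  then show ?thesis using ny c' by simp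
qed


lemma e1_nz: "Y (\<lambda>k. if k = 1 then 1 else 0) \<noteq> (\<lambda>x. 0)"
proof
  assume h: "Y (\<lambda>k. if k = 1 then 1 else 0) = (\<lambda>x. 0)"
  have "Y (\<lambda>k. if k = 1 then 1 else 0) (al 1) = (\<Sum>k=1..N. if k = 1 then complex_of_real (hk k (al 1)) else 0)"
    unfolding Y_alt by (intro sum.cong refl) auto
  also have "\<dots> = complex_of_real (hk 1 (al 1))" using N_pos by (simp add: sum.delta')
  also have "\<dots> = 1" using hk_al[OF N_pos N_pos] by simp
  finally show False using h by simp
qed

lemma main:
  shows "eventually (\<lambda>lam. bij_betw (C lam) (H2 a n m) (H2 a n m)) at_top
       \<and> (\<lambda>lam. opnorm_on (H2 a n m) (the_inv_into (H2 a n m) (C lam))) \<in> O(\<lambda>lam. 1 / lam)"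
proof -
  define L where "L = 2 * K1 / mu + 1"
  have good: "lam > 0 \<and> lam * mu \<ge> 2 * K1 \<and> lam * mu > K1" if "lam \<ge> L" for lam
  proof -
    have L0: "L > 0" unfolding L_def using K1_pos mu_pos by (simp add: add_pos_pos)
    have "lam * mu \<ge> L * mu" using that mu_pos by (simp add: mult_right_mono)
    also have "L * mu = 2 * K1 + mu" unfolding L_def using mu_pos by (simp add: field_simps)
    finally show ?thesis using that L0 mu_pos K1_pos by auto
  qed
  have bij: "bij_betw (C lam) (H2 a n m) (H2 a n m)" if "lam \<ge> L" for lam
    unfolding bij_betw_def using inj_C[of lam] surj_C[of lam] Cmaps good[OF that] by blast
  have bnd: "norm (opnorm_on (H2 a n m) (the_inv_into (H2 a n m) (C lam))) \<le> (2 * K1 / mu) * norm (1 / lam)"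
    if "lam \<ge> L" for lam
  proof -
    note gl = good[OF that]
    let ?T = "the_inv_into (H2 a n m) (C lam)"
    let ?R = "2 * K1 / (mu * lam)"
    let ?S = "(\<lambda>w. normH (?T w) / normH w) ` (H2 a n m - {\<lambda>x. 0})"
    have inj: "inj_on (C lam) (H2 a n m)" using inj_C gl by blast
    have mem: "0 \<le> x \<and> x \<le> ?R" if "x \<in> ?S" for x
    proof -
      obtain w where w: "w \<in> H2 a n m" "x = normH (?T w) / normH w" using \<open>x \<in> ?S\<close> by blast
      obtain y where y: "y \<in> H2 a n m" "w = C lam y" using surj_C[of lam] gl w(1) by blast
      have Ty: "?T w = y" using the_inv_into_f_f[OF inj y(1)] y(2) by simp
      obtain c where c: "y = Y c" using y(1) by (auto simp: H2_eq)
      obtain b where b: "w = Y b" using w(1) by (auto simp: H2_eq)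
      have kb: "normH y \<le> ?R * normH w" using keybound[of lam c] gl c y(2) by simp
      have n1: "normH y \<ge> 0" "normH w \<ge> 0" using c b normH_nonneg by auto
      have R0: "?R \<ge> 0" using K1_pos mu_pos gl by simp
      show ?thesis
      proof (cases "normH w = 0")
        case True then show ?thesis using w(2) R0 by simp
      next
        case False
        then have "normH w > 0" using n1 by simp
        then show ?thesis using w(2) Ty kb n1 by (simp add: divide_le_eq mult.commute)
      qed
    qed
    have ne: "?S \<noteq> {}" using e1_nz YH by blast
    have le: "Sup ?S \<le> ?R" by (rule cSup_least[OF ne]) (use mem in blast)
    have bdd: "bdd_above ?S" by (rule bdd_aboveI[of _ ?R]) (use mem in blast)
    obtain x0 where x0: "x0 \<in> ?S" using ne by blast
    have ge: "0 \<le> Sup ?S" using cSup_upper[OF x0 bdd] mem[OF x0] by linarith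
    have "norm (opnorm_on (H2 a n m) ?T) = Sup ?S" unfolding opnorm_on_def using ge by simp
    also have "\<dots> \<le> ?R" by (rule le)
    also have "?R = (2 * K1 / mu) * norm (1 / lam)" using gl by simp
    finally show ?thesis .
  qed
  show ?thesis
  proof
    show "eventually (\<lambda>lam. bij_betw (C lam) (H2 a n m) (H2 a n m)) at_top"
      unfolding eventually_at_top_linorder using bij by blast
    show "(\<lambda>lam. opnorm_on (H2 a n m) (the_inv_into (H2 a n m) (C lam))) \<in> O(\<lambda>lam. 1 / lam)"
      by (rule bigoI[where c = "2 * K1 / mu"]) (unfold eventually_at_top_linorder, use bnd in blast)
  qed
qed

end

theorem mainTheorem5:
  fixes n m :: nat and a d beta :: "nat \<Rightarrow> real" and P :: "real \<Rightarrow> real"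
    and C :: "real \<Rightarrow> (real \<Rightarrow> complex) \<Rightarrow> (real \<Rightarrow> complex)"
  assumes n2: "n \<ge> 2"
    and apos: "\<forall>k\<in>{1..n}. a k > 0"
    and asum: "(\<Sum>k=1..n. a k) = 1"
    and dsum: "(\<Sum>k=1..n. a k * (d k)\<^sup>2) < 1"
    and m: "m \<in> {1..n}"
    and dzero: "\<forall>k\<in>{1..n}. k \<noteq> m \<longrightarrow> d k = 0"
    and Pmeas: "P \<in> borel_measurable (lebesgue_on {0..1})"
    and PL2: "integrable (lebesgue_on {0..1}) (\<lambda>x. (P x)\<^sup>2)"
    and Pself: "\<forall>k\<in>{1..n}. AE x in lebesgue_on {0..1}.
                   P (alpha a (k - 1) + a k * x) = beta k + d k * P x"
    and Cmaps: "\<forall>lam. \<forall>y\<in>H2 a n m. C lam y \<in> H2 a n m"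
    and Cform: "\<forall>lam. \<forall>y\<in>H2 a n m. \<forall>z\<in>H2 a n m. ipH (C lam y) z = Cform P lam y z"
    and Z: "Zplus d beta n m + Zminus d beta n m = n - 1"
  shows "eventually (\<lambda>lam. bij_betw (C lam) (H2 a n m) (H2 a n m)) at_top
       \<and> (\<lambda>lam. opnorm_on (H2 a n m) (the_inv_into (H2 a n m) (C lam))) \<in> O(\<lambda>lam. 1 / lam)"
  proof -
  interpret sset3 n m a d beta P C
    using n2 apos asum m dzero Pself Cmaps Cform Z by unfold_locales auto
  show ?thesis by (rule main)
qed

end
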